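(* $GL(\omega)$ acts transitively on the set of dense countably dimensional linear subspaces of $\omega$: for any two dense linear subspaces $E,F\subseteq\omega$ of countably infinite Hamel dimension there is $J\in GL(\omega)$ with $J(E)=F$.
   Context: $\omega=\mathbb{K}^{\mathbb{N}}$ with the product topology, $\mathbb{K}\in\{\mathbb{R},\mathbb{C}\}$. $GL(\omega)$ is the group of continuous linear bijections of $\omega$ with continuous inverse. *)

theory Defs
  imports "HOL-Analysis.Analysis" "HOL-Library.Function_Algebras"
begin

text \<open>omega = K^N, modelled as the type nat => K; its topology is the product
  topology (the library's type-class instance for function spaces).
  Scalar multiplication is pointwise.\<close>

definition wsmul :: "'a::field \<Rightarrow> (nat \<Rightarrow> 'a) \<Rightarrow> (nat \<Rightarrow> 'a)" where
  "wsmul c x = (\<lambda>n. c * x n)"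

definition dense_countable_dim_subspace ::
    "(nat \<Rightarrow> 'a::{field, topological_space}) set \<Rightarrow> bool" where
  "dense_countable_dim_subspace E \<longleftrightarrow>
     module.subspace wsmul E \<and> closure E = UNIV \<and>
     (\<exists>B. B \<subseteq> E \<and> \<not> module.dependent wsmul B \<and> module.span wsmul B = E \<and>
          countable B \<and> infinite B)"

definition in_GL_omega :: "((nat \<Rightarrow> 'a::{field, topological_space}) \<Rightarrow> (nat \<Rightarrow> 'a)) \<Rightarrow> bool" where
  "in_GL_omega J \<longleftrightarrow>
     Vector_Spaces.linear wsmul wsmul J \<and> bij J \<and>
     continuous_on UNIV J \<and> continuous_on UNIV (inv J)"

end

theory Submission
  imports Defs
begin


lemma wsmul_vs: "vector_space (wsmul :: 'a::field \<Rightarrow> _)"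
  by unfold_locales (auto simp: wsmul_def fun_eq_iff algebra_simps)

interpretation W: vector_space "wsmul :: 'a::field \<Rightarrow> (nat \<Rightarrow> 'a) \<Rightarrow> _"
  by (rule wsmul_vs)

lemma sum_fun_app: "sum f A (j::nat) = (\<Sum>i\<in>A. f i j)"
  by (induct A rule: infinite_finite_induct) auto

definition fsupp :: "(nat \<Rightarrow> 'a::zero) \<Rightarrow> nat set" where "fsupp g = {m. g m \<noteq> 0}"
definition Phi :: "(nat \<Rightarrow> 'a::zero) set" where "Phi = {g. finite (fsupp g)}"
definition pr :: "(nat \<Rightarrow> 'a::field) \<Rightarrow> (nat \<Rightarrow> 'a) \<Rightarrow> 'a" where
  "pr g x = (\<Sum>m\<in>fsupp g. g m * x m)"
definition dl :: "nat \<Rightarrow> nat \<Rightarrow> 'a::zero_neq_one" where "dl j = (\<lambda>m. if m = j then 1 else 0)"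

lemma pr_eq: assumes "finite S" "fsupp g \<subseteq> S" shows "pr g x = (\<Sum>m\<in>S. g m * x m)"
  unfolding pr_def by (rule sum.mono_neutral_left) (use assms in \<open>auto simp: fsupp_def\<close>)

lemma fsupp_dl: "fsupp (dl j) = {j}" by (auto simp: fsupp_def dl_def)
lemma dl_Phi[simp]: "dl j \<in> Phi" by (simp add: Phi_def fsupp_dl)
lemma pr_dl[simp]: "pr (dl j) x = x j" unfolding pr_def fsupp_dl by (simp add: dl_def)

lemma pr_diff_right: "pr g (\<lambda>m. x m - y m) = pr g x - pr g y"
  by (simp add: pr_def right_diff_distrib sum_subtractf)
lemma pr_add_right: "pr g (\<lambda>m. x m + y m) = pr g x + pr g y"
  by (simp add: pr_def distrib_left sum.distrib)
lemma pr_scale_right: "pr g (\<lambda>m. c * x m) = c * pr g x"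
  by (simp add: pr_def sum_distrib_left mult.left_commute)
lemma pr_lc_right: "pr g (\<lambda>m. \<Sum>i<(n::nat). a i * U i m) = (\<Sum>i<n. a i * pr g (U i))"
proof -
  have "pr g (\<lambda>m. \<Sum>i<n. a i * U i m) = (\<Sum>m\<in>fsupp g. \<Sum>i<n. a i * (g m * U i m))"
    unfolding pr_def by (simp add: sum_distrib_left mult.left_commute)
  also have "\<dots> = (\<Sum>i<n. \<Sum>m\<in>fsupp g. a i * (g m * U i m))" by (rule sum.swap)
  also have "\<dots> = (\<Sum>i<n. a i * pr g (U i))" by (simp add: pr_def sum_distrib_left)
  finally show ?thesis .
qed

lemma Phi_fin: "g \<in> Phi \<Longrightarrow> finite (fsupp g)" by (simp add: Phi_def)

lemma fsupp_diff: fixes g h :: "nat \<Rightarrow> 'a::field" and F :: "nat \<Rightarrow> nat \<Rightarrow> 'a" shows "fsupp (\<lambda>m. g m - h m) \<subseteq> fsupp g \<union> fsupp h" by (auto simp: fsupp_def)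
lemma fsupp_add: fixes g h :: "nat \<Rightarrow> 'a::field" and F :: "nat \<Rightarrow> nat \<Rightarrow> 'a" shows "fsupp (\<lambda>m. g m + h m) \<subseteq> fsupp g \<union> fsupp h" by (auto simp: fsupp_def)
lemma fsupp_scale: fixes g h :: "nat \<Rightarrow> 'a::field" and F :: "nat \<Rightarrow> nat \<Rightarrow> 'a" shows "fsupp (\<lambda>m. c * g m) \<subseteq> fsupp g" by (auto simp: fsupp_def)
lemma fsupp_lc: "fsupp (\<lambda>m. \<Sum>i<(n::nat). a i * (F i m :: 'a::field)) \<subseteq> (\<Union>i<n. fsupp (F i))"
proof
  fix m assume m: "m \<in> fsupp (\<lambda>m. \<Sum>i<n. a i * F i m)"
  show "m \<in> (\<Union>i<n. fsupp (F i))"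
  proof (rule ccontr)
    assume "m \<notin> (\<Union>i<n. fsupp (F i))"
    then have "\<forall>i<n. F i m = 0" by (auto simp: fsupp_def)
    then have "(\<Sum>i<n. a i * F i m) = 0" by simp
    with m show False by (simp add: fsupp_def)
  qed
qed

lemma fin_UN_Phi: assumes "\<And>i. i < (n::nat) \<Longrightarrow> F i \<in> Phi" shows "finite (\<Union>i<n. fsupp (F i))"
proof (subst finite_UN)
  show "finite {..<n}" by simp
  show "\<forall>i\<in>{..<n}. finite (fsupp (F i))" using assms by (auto simp: Phi_fin)
qed

lemma Phi_diff: "g \<in> Phi \<Longrightarrow> h \<in> Phi \<Longrightarrow> (\<lambda>m. g m - h m :: 'a::field) \<in> Phi"
  unfolding Phi_def mem_Collect_eq by (rule finite_subset[OF fsupp_diff]) simp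
lemma Phi_add: "g \<in> Phi \<Longrightarrow> h \<in> Phi \<Longrightarrow> (\<lambda>m. g m + h m :: 'a::field) \<in> Phi"
  unfolding Phi_def mem_Collect_eq by (rule finite_subset[OF fsupp_add]) simp
lemma Phi_scale: "g \<in> Phi \<Longrightarrow> (\<lambda>m. c * g m :: 'a::field) \<in> Phi"
  unfolding Phi_def mem_Collect_eq by (rule finite_subset[OF fsupp_scale])
lemma Phi_lc: "(\<And>i. i < (n::nat) \<Longrightarrow> F i \<in> Phi) \<Longrightarrow> (\<lambda>m. \<Sum>i<n. a i * (F i m :: 'a::field)) \<in> Phi"
  unfolding Phi_def mem_Collect_eq by (rule finite_subset[OF fsupp_lc fin_UN_Phi]) (simp add: Phi_def)

lemma pr_diff_left: assumes "g \<in> Phi" "h \<in> Phi"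
  shows "pr (\<lambda>m. g m - h m) x = pr g x - pr h x"
proof -
  let ?S = "fsupp g \<union> fsupp h"
  have f: "finite ?S" using assms by (simp add: Phi_fin)
  have "pr (\<lambda>m. g m - h m) x = (\<Sum>m\<in>?S. (g m - h m) * x m)" by (rule pr_eq[OF f fsupp_diff])
  also have "\<dots> = (\<Sum>m\<in>?S. g m * x m) - (\<Sum>m\<in>?S. h m * x m)"
    by (simp add: left_diff_distrib sum_subtractf)
  also have "\<dots> = pr g x - pr h x" by (simp add: pr_eq[OF f])
  finally show ?thesis .
qed

lemma pr_scale_left: "pr (\<lambda>m. c * g m) x = c * pr g x"
proof (cases "c = 0")
  case True thus ?thesis by (simp add: pr_def fsupp_def)
next
  case False
  hence "fsupp (\<lambda>m. c * g m) = fsupp g" by (auto simp: fsupp_def)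
  thus ?thesis by (simp add: pr_def sum_distrib_left mult.assoc)
qed

lemma pr_lc_left: assumes "\<And>i. i < (n::nat) \<Longrightarrow> F i \<in> Phi"
  shows "pr (\<lambda>m. \<Sum>i<n. a i * F i m) x = (\<Sum>i<n. a i * pr (F i) x)"
proof -
  let ?S = "\<Union>i<n. fsupp (F i)"
  have f: "finite ?S" by (rule fin_UN_Phi) (rule assms)
  have e: "\<And>i. i < n \<Longrightarrow> pr (F i) x = (\<Sum>m\<in>?S. F i m * x m)"
    by (rule pr_eq[OF f]) auto
  have "pr (\<lambda>m. \<Sum>i<n. a i * F i m) x = (\<Sum>m\<in>?S. (\<Sum>i<n. a i * F i m) * x m)"
    by (rule pr_eq[OF f fsupp_lc])
  also have "\<dots> = (\<Sum>m\<in>?S. \<Sum>i<n. a i * (F i m * x m))"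
    by (simp add: sum_distrib_right mult.assoc)
  also have "\<dots> = (\<Sum>i<n. \<Sum>m\<in>?S. a i * (F i m * x m))" by (rule sum.swap)
  also have "\<dots> = (\<Sum>i<n. a i * pr (F i) x)" by (simp add: e sum_distrib_left)
  finally show ?thesis .
qed



definition R :: "(nat \<Rightarrow> nat \<Rightarrow> 'a::field) \<Rightarrow> (nat \<Rightarrow> nat \<Rightarrow> 'a) \<Rightarrow> nat \<Rightarrow> (nat \<Rightarrow> 'a) \<Rightarrow> nat \<Rightarrow> 'a" where
  "R U F n v = (\<lambda>j. v j - (\<Sum>i<n. pr (F i) v * U i j))"
definition S :: "(nat \<Rightarrow> nat \<Rightarrow> 'a::field) \<Rightarrow> (nat \<Rightarrow> nat \<Rightarrow> 'a) \<Rightarrow> nat \<Rightarrow> (nat \<Rightarrow> 'a) \<Rightarrow> nat \<Rightarrow> 'a" where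
  "S U F n h = (\<lambda>j. h j - (\<Sum>i<n. pr h (U i) * F i j))"
definition Good :: "(nat \<Rightarrow> 'a::field) set \<Rightarrow> (nat \<Rightarrow> nat \<Rightarrow> 'a) \<Rightarrow> (nat \<Rightarrow> nat \<Rightarrow> 'a) \<Rightarrow> nat \<Rightarrow> bool" where
  "Good E U F n \<longleftrightarrow> (\<forall>i<n. U i \<in> E \<and> F i \<in> Phi) \<and> (\<forall>i<n. \<forall>k<n. pr (F i) (U k) = (if i = k then 1 else 0))"

lemma lc_eq: "(\<lambda>j. \<Sum>i<(n::nat). a i * U i j) = (\<Sum>i<n. wsmul (a i) (U i))"
  by (simp add: fun_eq_iff sum_fun_app wsmul_def)

lemma lc_span: "(\<And>i. i < (n::nat) \<Longrightarrow> U i \<in> W.span X) \<Longrightarrow> (\<lambda>j. \<Sum>i<n. a i * U i j) \<in> W.span X"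
  unfolding lc_eq by (intro W.span_sum W.span_scale) auto

lemma lc_sub: "W.subspace E \<Longrightarrow> (\<And>i. i < (n::nat) \<Longrightarrow> U i \<in> E) \<Longrightarrow> (\<lambda>j. \<Sum>i<n. a i * U i j) \<in> E"
  unfolding lc_eq by (intro W.subspace_sum W.subspace_scale) auto

lemma sub_diff: "W.subspace E \<Longrightarrow> x \<in> E \<Longrightarrow> y \<in> E \<Longrightarrow> (\<lambda>j. x j - y j) \<in> E"
  using W.subspace_diff[of E x y] by (simp add: fun_diff_def)

lemma span_addp: "x \<in> W.span X \<Longrightarrow> y \<in> W.span X \<Longrightarrow> (\<lambda>j. x j + y j) \<in> W.span X"
  using W.span_add[of x X y] by (simp add: plus_fun_def)

lemma R_in: assumes "W.subspace E" "Good E U F n" "v \<in> E" shows "R U F n v \<in> E"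
  unfolding R_def using assms by (intro sub_diff lc_sub) (auto simp: Good_def)

lemma S_Phi: assumes "Good E U F n" "h \<in> Phi" shows "S U F n h \<in> Phi"
  unfolding S_def using assms by (intro Phi_diff Phi_lc) (auto simp: Good_def)

lemma pr_S_R: assumes "\<And>i. i < n \<Longrightarrow> F i \<in> Phi" "h \<in> Phi"
  shows "pr h (R U F n v) = pr (S U F n h) v"
proof -
  have "pr h (R U F n v) = pr h v - (\<Sum>i<n. pr (F i) v * pr h (U i))"
    unfolding R_def by (simp add: pr_diff_right pr_lc_right)
  moreover have "pr (S U F n h) v = pr h v - (\<Sum>i<n. pr h (U i) * pr (F i) v)"
    unfolding S_def using assms by (simp add: pr_diff_left Phi_lc pr_lc_left)
  ultimately show ?thesis by (simp add: mult.commute)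
qed

lemma delta_sum: assumes "i < (n::nat)" shows "(\<Sum>k<n. c k * (if i = k then 1 else 0)) = (c i :: 'a::field)"
proof -
  have "(\<Sum>k<n. c k * (if i = k then 1 else 0)) = (\<Sum>k\<in>{..<n}. if k = i then c k else 0)"
    by (rule sum.cong) auto
  also have "\<dots> = c i" using assms by (simp add: sum.delta)
  finally show ?thesis .
qed

lemma delta_sum2: assumes "i < (n::nat)" shows "(\<Sum>k<n. c k * (if k = i then 1 else 0)) = (c i :: 'a::field)"
proof -
  have "(\<Sum>k<n. c k * (if k = i then 1 else 0)) = (\<Sum>k<n. c k * (if i = k then 1 else 0))"
    by (rule sum.cong) auto
  thus ?thesis using delta_sum[OF assms] by simp
qed

lemma pr_F_R: assumes "Good E U F n" "i < n" shows "pr (F i) (R U F n v) = 0"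
proof -
  have "pr (F i) (R U F n v) = pr (F i) v - (\<Sum>k<n. pr (F k) v * pr (F i) (U k))"
    unfolding R_def by (simp add: pr_diff_right pr_lc_right)
  also have "\<dots> = pr (F i) v - (\<Sum>k<n. pr (F k) v * (if i = k then 1 else 0))"
    using assms by (simp add: Good_def)
  also have "\<dots> = 0" using assms(2) by (simp add: delta_sum)
  finally show ?thesis .
qed

lemma R_U: assumes "Good E U F n" "i < n" shows "R U F n (U i) = 0"
proof -
  have "\<And>j. (\<Sum>k<n. pr (F k) (U i) * U k j) = U i j"
  proof -
    fix j
    have "(\<Sum>k<n. pr (F k) (U i) * U k j) = (\<Sum>k<n. U k j * (if k = i then 1 else 0))"
      using assms by (intro sum.cong) (auto simp: Good_def)
    also have "\<dots> = U i j" using assms(2) by (rule delta_sum2)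
    finally show "(\<Sum>k<n. pr (F k) (U i) * U k j) = U i j" .
  qed
  thus ?thesis by (simp add: R_def fun_eq_iff)
qed

lemma pr_zero_right[simp]: "pr g (\<lambda>_. 0) = 0" by (simp add: pr_def)
lemma pr_zero_right'[simp]: "pr g 0 = 0" by (simp add: pr_def)

lemma pr_S_U: assumes "Good E U F n" "h \<in> Phi" "i < n" shows "pr (S U F n h) (U i) = 0"
proof -
  have "pr (S U F n h) (U i) = pr h (R U F n (U i))"
    using assms by (intro pr_S_R[symmetric]) (auto simp: Good_def)
  thus ?thesis using R_U[OF assms(1,3)] by simp
qed

lemma R_R: assumes "Good E U F n" shows "R U F n (R U F n v) = R U F n v"
  using pr_F_R[OF assms] by (simp add: R_def[of U F n "R U F n v"])

lemma step_Good:
  assumes sub: "W.subspace E" and G: "Good E U F n" and v: "v \<in> E" and h: "h \<in> Phi"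
    and c: "pr h (R U F n v) \<noteq> 0"
  shows "Good E (U(n := R U F n v)) (F(n := (\<lambda>j. inverse (pr h (R U F n v)) * S U F n h j))) (Suc n)"
proof -
  let ?c = "pr h (R U F n v)"
  have FP: "\<And>i. i < n \<Longrightarrow> F i \<in> Phi" using G by (simp add: Good_def)
  have a: "pr (\<lambda>j. inverse ?c * S U F n h j) (R U F n v) = 1"
  proof -
    have "pr (S U F n h) (R U F n v) = pr h (R U F n (R U F n v))"
      using FP h by (intro pr_S_R[symmetric])
    also have "\<dots> = ?c" using R_R[OF G] by simp
    finally show ?thesis using c by (simp add: pr_scale_left)
  qed
  have b: "\<And>k. k < n \<Longrightarrow> pr (\<lambda>j. inverse ?c * S U F n h j) (U k) = 0"
    using pr_S_U[OF G h] by (simp add: pr_scale_left)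
  have d: "\<And>i. i < n \<Longrightarrow> pr (F i) (R U F n v) = 0" using pr_F_R[OF G] by simp
  show ?thesis
    unfolding Good_def using G a b d R_in[OF sub G v] Phi_scale[OF S_Phi[OF G h]]
    by (auto simp: Good_def less_Suc_eq)
qed

lemma Good_cong: "(\<And>i. i < n \<Longrightarrow> U i = U' i) \<Longrightarrow> (\<And>i. i < n \<Longrightarrow> F i = F' i) \<Longrightarrow> Good E U F n = Good E U' F' n"
  by (simp add: Good_def)
lemma R_cong: assumes "\<And>i. i < n \<Longrightarrow> U i = U' i" "\<And>i. i < n \<Longrightarrow> F i = F' i" shows "R U F n = R U' F' n"
  unfolding R_def by (intro ext) (auto simp: assms intro!: sum.cong)
lemma S_cong: assumes "\<And>i. i < n \<Longrightarrow> U i = U' i" "\<And>i. i < n \<Longrightarrow> F i = F' i" shows "S U F n = S U' F' n"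
  unfolding S_def by (intro ext) (auto simp: assms intro!: sum.cong)

lemma pr_dl_right: "g \<in> Phi \<Longrightarrow> pr g (dl j) = g j"
  unfolding pr_def dl_def by (auto simp: Phi_def fsupp_def if_distrib[of "\<lambda>x. _ * x"] cong: if_cong)

lemma cont_pr: "continuous_on UNIV (\<lambda>x. pr g (x :: nat \<Rightarrow> 'a::real_normed_field))"
  unfolding pr_def by (intro continuous_intros continuous_on_product_coordinates)



locale cons =
  fixes E :: "(nat \<Rightarrow> 'a::real_normed_field) set" and B
  assumes sub: "W.subspace E" and dense: "closure E = UNIV" and BE: "B \<subseteq> E"
    and indep: "\<not> W.dependent B" and spanB: "W.span B = E" and cB: "countable B" and iB: "infinite B"
begin

definition bb :: "nat \<Rightarrow> nat \<Rightarrow> 'a" where "bb = from_nat_into B"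

lemma Bne: "B \<noteq> {}" using iB by auto
lemma bb_E: "bb k \<in> E" using from_nat_into[OF Bne] BE by (auto simp: bb_def)
lemma range_bb: "range bb = B" using Bne cB by (simp add: bb_def)

definition ok where
  "ok U F n vh \<longleftrightarrow> fst vh \<in> E \<and> snd vh \<in> Phi \<and> pr (snd vh) (R U F n (fst vh)) \<noteq> 0 \<and>
     (even n \<longrightarrow> R U F n (bb (n div 2)) \<noteq> 0 \<longrightarrow> fst vh = bb (n div 2)) \<and>
     (odd n \<longrightarrow> S U F n (dl (n div 2)) \<noteq> 0 \<longrightarrow> snd vh = dl (n div 2))"

lemma gen_exists: assumes G: "Good E U F n" shows "\<exists>v\<in>E. \<exists>j. R U F n v j \<noteq> 0"
proof (rule ccontr)
  assume "\<not> ?thesis"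
  hence z: "\<And>v j. v \<in> E \<Longrightarrow> R U F n v j = 0" by auto
  have "E \<subseteq> W.span (U ` {..<n})"
  proof
    fix v assume v: "v \<in> E"
    have "v = (\<lambda>j. \<Sum>i<n. pr (F i) v * U i j)"
      using z[OF v] by (auto simp: R_def fun_eq_iff)
    also have "\<dots> \<in> W.span (U ` {..<n})" by (intro lc_span W.span_base) auto
    finally show "v \<in> W.span (U ` {..<n})" .
  qed
  hence "B \<subseteq> W.span (U ` {..<n})" using BE by auto
  hence "finite B" using W.independent_span_bound[of "U ` {..<n}" B] indep by auto
  thus False using iB by simp
qed

lemma dense_pr: assumes g: "g \<in> Phi" "g \<noteq> 0" shows "\<exists>v\<in>E. pr g v \<noteq> 0"
proof -
  obtain j where j: "g j \<noteq> 0" using g(2) by (auto simp: fun_eq_iff)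
  let ?O = "{x. pr g x \<noteq> 0}"
  have o: "open ?O" using cont_pr[of g] by (intro open_Collect_neq) auto
  have "dl j \<in> ?O" using j pr_dl_right[OF g(1)] by simp
  hence "?O \<inter> closure E \<noteq> {}" using dense by auto
  hence "?O \<inter> E \<noteq> {}" using open_Int_closure_eq_empty[OF o] by auto
  thus ?thesis by auto
qed

lemma ok_exists: assumes G: "Good E U F n" shows "\<exists>vh. ok U F n vh"
proof -
  have FP: "\<And>i. i < n \<Longrightarrow> F i \<in> Phi" using G by (simp add: Good_def)
  show ?thesis
  proof (cases "even n \<and> R U F n (bb (n div 2)) \<noteq> 0")
    case True
    then obtain j where j: "R U F n (bb (n div 2)) j \<noteq> 0" by (auto simp: fun_eq_iff)
    have "ok U F n (bb (n div 2), dl j)" using True j bb_E by (simp add: ok_def)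
    thus ?thesis by blast
  next
    case c1: False
    show ?thesis
    proof (cases "odd n \<and> S U F n (dl (n div 2)) \<noteq> 0")
      case True
      have "S U F n (dl (n div 2)) \<in> Phi" by (rule S_Phi[OF G]) simp
      then obtain v where v: "v \<in> E" "pr (S U F n (dl (n div 2))) v \<noteq> 0"
        using dense_pr True by blast
      have "pr (dl (n div 2)) (R U F n v) \<noteq> 0" using v pr_S_R[OF FP, where h="dl (n div 2)" and U=U and v=v] by simp
      hence "ok U F n (v, dl (n div 2))" using True v by (simp add: ok_def)
      thus ?thesis by blast
    next
      case False
      obtain v j where v: "v \<in> E" "R U F n v j \<noteq> 0" using gen_exists[OF G] by blast
      have "ok U F n (v, dl j)" using c1 False v by (auto simp: ok_def)
      thus ?thesis by blast
    qed
  qed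
qed

definition chooser where "chooser U F n = (SOME vh. ok U F n vh)"

lemma chooser_ok: "Good E U F n \<Longrightarrow> ok U F n (chooser U F n)"
  unfolding chooser_def using ok_exists by (rule someI_ex) 

definition nxt where
  "nxt U F n = (R U F n (fst (chooser U F n)),
      (\<lambda>j. inverse (pr (snd (chooser U F n)) (R U F n (fst (chooser U F n)))) * S U F n (snd (chooser U F n)) j))"

primrec st :: "nat \<Rightarrow> (nat \<Rightarrow> nat \<Rightarrow> 'a) \<times> (nat \<Rightarrow> nat \<Rightarrow> 'a)" where
  "st 0 = (\<lambda>_ _. 0, \<lambda>_ _. 0)"
| "st (Suc n) = ((fst (st n))(n := fst (nxt (fst (st n)) (snd (st n)) n)),
                 (snd (st n))(n := snd (nxt (fst (st n)) (snd (st n)) n)))"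

lemma st_Good: "Good E (fst (st n)) (snd (st n)) n"
proof (induction n)
  case 0 show ?case by (simp add: Good_def)
next
  case (Suc n)
  let ?U = "fst (st n)" and ?F = "snd (st n)"
  have o: "ok ?U ?F n (chooser ?U ?F n)" by (rule chooser_ok[OF Suc])
  show ?case
    using step_Good[OF sub Suc, of "fst (chooser ?U ?F n)" "snd (chooser ?U ?F n)"] o
    by (simp add: ok_def nxt_def fun_upd_def)
qed

lemma st_stable: "k < n \<Longrightarrow> fst (st n) k = fst (st (Suc k)) k \<and> snd (st n) k = snd (st (Suc k)) k"
proof (induction n)
  case 0 thus ?case by simp
next
  case (Suc n)
  show ?case
  proof (cases "k = n")
    case True thus ?thesis by simp
  next
    case False
    hence "k < n" using Suc.prems by simp
    thus ?thesis using Suc.IH False by simp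
  qed
qed

definition u where "u k = fst (st (Suc k)) k"
definition f where "f k = snd (st (Suc k)) k"

lemma U_eq: "i < n \<Longrightarrow> fst (st n) i = u i" using st_stable by (simp add: u_def)
lemma F_eq: "i < n \<Longrightarrow> snd (st n) i = f i" using st_stable by (simp add: f_def)

lemma u_nxt: "u n = fst (nxt (fst (st n)) (snd (st n)) n)" by (simp add: u_def)
lemma f_nxt: "f n = snd (nxt (fst (st n)) (snd (st n)) n)" by (simp add: f_def)

lemma Good_uf: "Good E u f n"
  using st_Good[of n] Good_cong[of n "fst (st n)" u "snd (st n)" f E] U_eq F_eq by simp

lemma u_E: "u k \<in> E" using Good_uf[of "Suc k"] by (simp add: Good_def)
lemma f_Phi: "f k \<in> Phi" using Good_uf[of "Suc k"] by (simp add: Good_def)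
lemma biorth: "pr (f i) (u k) = (if i = k then 1 else 0)"
  using Good_uf[of "Suc (max i k)"] by (simp add: Good_def less_Suc_eq_le)

lemma b_span: "bb k \<in> W.span (range u)"
proof -
  define n where "n = 2 * k"
  have en: "even n" and nk: "n div 2 = k" by (simp_all add: n_def)
  let ?U = "fst (st n)" and ?F = "snd (st n)"
  have o: "ok ?U ?F n (chooser ?U ?F n)" by (rule chooser_ok[OF st_Good])
  have Rc: "R ?U ?F n = R u f n" by (rule R_cong[OF U_eq F_eq])
  have us: "\<And>i. i < n \<Longrightarrow> u i \<in> W.span (range u)" by (intro W.span_base) auto
  have lc: "(\<lambda>j. \<Sum>i<n. pr (f i) (bb k) * u i j) \<in> W.span (range u)" by (rule lc_span[OF us])
  have dec: "\<And>j. bb k j = R u f n (bb k) j + (\<Sum>i<n. pr (f i) (bb k) * u i j)"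
    by (simp add: R_def)
  have eq: "bb k = (\<lambda>j. R u f n (bb k) j + (\<Sum>i<n. pr (f i) (bb k) * u i j))"
    by (rule ext) (rule dec)
  show ?thesis
  proof (cases "R u f n (bb k) = 0")
    case True
    have *: "bb k = (\<lambda>j. \<Sum>i<n. pr (f i) (bb k) * u i j)"
    proof (rule ext)
      fix j show "bb k j = (\<Sum>i<n. pr (f i) (bb k) * u i j)" using dec[of j] True by simp
    qed
    show ?thesis by (subst *) (rule lc)
  next
    case False
    hence "fst (chooser ?U ?F n) = bb k" using o Rc en nk unfolding ok_def by simp
    hence "u n = R u f n (bb k)" using u_nxt[of n] Rc by (simp add: nxt_def)
    moreover have "u n \<in> W.span (range u)" by (intro W.span_base) auto
    ultimately have un: "R u f n (bb k) \<in> W.span (range u)" by simp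
    show ?thesis by (subst eq) (rule span_addp[OF un lc])
  qed
qed

lemma dl_comb: "\<exists>N a. dl k = (\<lambda>j. \<Sum>i<N. a i * f i j)"
proof -
  define n where "n = Suc (2 * k)"
  have on: "odd n" and nk: "n div 2 = k" by (simp_all add: n_def)
  let ?U = "fst (st n)" and ?F = "snd (st n)"
  have o: "ok ?U ?F n (chooser ?U ?F n)" by (rule chooser_ok[OF st_Good])
  have Rc: "R ?U ?F n = R u f n" by (rule R_cong[OF U_eq F_eq])
  have Sc: "S ?U ?F n = S u f n" by (rule S_cong[OF U_eq F_eq])
  have dec: "\<And>j. dl k j = S u f n (dl k) j + (\<Sum>i<n. pr (dl k) (u i) * f i j)"
    by (simp add: S_def)
  show ?thesis
  proof (cases "S u f n (dl k) = 0")
    case True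
    have d1: "dl k = (\<lambda>j. \<Sum>i<n. pr (dl k) (u i) * f i j)"
    proof
      fix j
      have z: "S u f n (dl k) j = 0" using True by simp
      show "dl k j = (\<Sum>i<n. pr (dl k) (u i) * f i j)" using dec[of j] z by simp
    qed
    show ?thesis by (rule exI[where x="n"], rule exI[where x="\<lambda>i. pr (dl k) (u i)"], rule d1)
  next
    case False
    have h: "snd (chooser ?U ?F n) = dl k" using o Sc False on nk unfolding ok_def by simp
    define c where "c = pr (dl k) (R u f n (fst (chooser ?U ?F n)))"
    have c: "c \<noteq> 0" using o Rc h unfolding ok_def c_def by simp
    have fn: "f n = (\<lambda>j. inverse c * S u f n (dl k) j)"
      using f_nxt[of n] Rc Sc h unfolding nxt_def c_def by simp
    define a where "a = (\<lambda>i. if i = n then c else pr (dl k) (u i))"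
    have "dl k = (\<lambda>j. \<Sum>i<Suc n. a i * f i j)"
    proof
      fix j
      have "(\<Sum>i<Suc n. a i * f i j) = (\<Sum>i<n. a i * f i j) + c * f n j"
        by (simp add: a_def)
      also have "(\<Sum>i<n. a i * f i j) = (\<Sum>i<n. pr (dl k) (u i) * f i j)"
        by (rule sum.cong) (auto simp: a_def)
      also have "c * f n j = S u f n (dl k) j" using c fn by simp
      finally show "dl k j = (\<Sum>i<Suc n. a i * f i j)" using dec[of j] by (simp add: algebra_simps)
    qed
    thus ?thesis by blast
  qed
qed

lemma E_span: "E \<subseteq> W.span (range u)"
proof -
  have "range bb \<subseteq> W.span (range u)" using b_span by auto
  hence "W.span (range bb) \<subseteq> W.span (range u)" by (intro W.span_minimal) auto
  thus ?thesis using spanB range_bb by simp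
qed

lemma result: "\<exists>(u::nat \<Rightarrow> nat \<Rightarrow> 'a) (f::nat \<Rightarrow> nat \<Rightarrow> 'a). (\<forall>k. u k \<in> E) \<and> (\<forall>k. f k \<in> Phi) \<and> (\<forall>i k. pr (f i) (u k) = (if i = k then 1 else 0))
   \<and> E \<subseteq> W.span (range u) \<and> (\<forall>j. \<exists>(N::nat) a. dl j = (\<lambda>m. \<Sum>i<N. a i * f i m))"
proof -
  have *: "(\<forall>k. u k \<in> E) \<and> (\<forall>k. f k \<in> Phi) \<and> (\<forall>i k. pr (f i) (u k) = (if i = k then 1 else 0))
   \<and> E \<subseteq> W.span (range u) \<and> (\<forall>j. \<exists>N a. dl j = (\<lambda>m. \<Sum>i<N. a i * f i m))"
    by (intro conjI allI u_E f_Phi biorth E_span dl_comb)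
  show ?thesis
    apply (rule exI[of _ u])
    apply (rule exI[of _ f])
    by (rule *)
qed

end


lemma build_JK:
  fixes E :: "(nat \<Rightarrow> 'a::real_normed_field) set"
    and u f :: "nat \<Rightarrow> nat \<Rightarrow> 'a"
  assumes sub: "W.subspace E" and uE: "\<And>k. u k \<in> E" and fP: "\<And>k. f k \<in> Phi"
    and bio: "\<And>i k. pr (f i) (u k) = (if i = k then 1 else 0)"
    and Esp: "E \<subseteq> W.span (range u)"
    and dc: "\<And>j. \<exists>(N::nat) a. dl j = (\<lambda>m. \<Sum>i<N. a i * f i m)"
  shows "\<exists>J K. Vector_Spaces.linear wsmul wsmul J \<and> Vector_Spaces.linear wsmul wsmul K \<and>
    continuous_on UNIV J \<and> continuous_on UNIV K \<and> (\<forall>x. K (J x) = x) \<and> (\<forall>y. J (K y) = y) \<and> J ` E = Phi"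
proof -
  obtain Nn where Nn: "\<And>j. \<exists>a. dl j = (\<lambda>m. \<Sum>i<Nn j. a i * f i m)"
    using dc by metis
  have coef: "\<And>j x. pr (dl j) x = (\<Sum>i<Nn j. u i j * pr (f i) x) \<and> (\<forall>k. Nn j \<le> k \<longrightarrow> u k j = 0)"
  proof -
    fix j x
    obtain a where a: "dl j = (\<lambda>m. \<Sum>i<Nn j. a i * f i m)" using Nn by blast
    have pl: "\<And>y. pr (dl j) y = (\<Sum>i<Nn j. a i * pr (f i) y)"
      by (subst a) (rule pr_lc_left, rule fP)
    have ai: "\<And>k. u k j = (\<Sum>i<Nn j. a i * (if i = k then 1 else 0))"
      using pl[of "u _"] by (simp add: bio)
    have ae: "\<And>i. i < Nn j \<Longrightarrow> a i = u i j" using ai delta_sum2 by metis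
    have z: "\<forall>k. Nn j \<le> k \<longrightarrow> u k j = 0"
    proof (intro allI impI)
      fix k assume "Nn j \<le> k"
      hence "\<And>i. i < Nn j \<Longrightarrow> (if i = k then 1 else 0) = (0::'a)" by auto
      thus "u k j = 0" using ai[of k] by simp
    qed
    have "pr (dl j) x = (\<Sum>i<Nn j. u i j * pr (f i) x)"
      unfolding pl by (rule sum.cong) (auto simp: ae)
    thus "pr (dl j) x = (\<Sum>i<Nn j. u i j * pr (f i) x) \<and> (\<forall>k. Nn j \<le> k \<longrightarrow> u k j = 0)"
      using z by blast
  qed
  have ID: "\<And>j x. x j = (\<Sum>i<Nn j. u i j * pr (f i) x)" using coef by (metis pr_dl)
  have Z: "\<And>j k. Nn j \<le> k \<Longrightarrow> u k j = 0" using coef by blast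
  define J where "J = (\<lambda>x. \<lambda>i. pr (f i) x)"
  define K where "K = (\<lambda>y. \<lambda>j. \<Sum>i<Nn j. u i j * y i)"
  have KJ: "\<forall>x. K (J x) = x" by (simp add: K_def J_def fun_eq_iff ID[symmetric])
  have extN: "\<And>y m M. Nn m \<le> M \<Longrightarrow> (\<Sum>i<Nn m. u i m * y i) = (\<Sum>i<M. u i m * y i)"
    by (rule sum.mono_neutral_left) (auto simp: Z)
  have JK: "\<forall>y. J (K y) = y"
  proof (intro allI ext)
    fix y n
    let ?S = "fsupp (f n)"
    have fS: "finite ?S" using fP by (simp add: Phi_fin)
    obtain M0 where M0: "\<forall>m\<in>?S. Nn m \<le> M0"
      using fS finite_nat_set_iff_bounded_le[of "Nn ` ?S"] by auto
    define M where "M = max M0 (Suc n)"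
    have nM: "n < M" by (simp add: M_def)
    have NM: "\<forall>m\<in>?S. Nn m \<le> M" using M0 by (auto simp: M_def)
    have "J (K y) n = (\<Sum>m\<in>?S. f n m * K y m)" by (simp add: J_def pr_def)
    also have "\<dots> = (\<Sum>m\<in>?S. f n m * (\<Sum>i<M. u i m * y i))"
      by (rule sum.cong[OF refl]) (use NM in \<open>auto simp: K_def intro!: extN\<close>)
    also have "\<dots> = (\<Sum>m\<in>?S. \<Sum>i<M. y i * (f n m * u i m))"
      by (simp add: sum_distrib_left mult_ac)
    also have "\<dots> = (\<Sum>i<M. \<Sum>m\<in>?S. y i * (f n m * u i m))" by (rule sum.swap)
    also have "\<dots> = (\<Sum>i<M. y i * pr (f n) (u i))" by (simp add: pr_def sum_distrib_left)
    also have "\<dots> = (\<Sum>i<M. y i * (if n = i then 1 else 0))" by (simp add: bio)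
    also have "\<dots> = y n" by (rule delta_sum[OF nM])
    finally show "J (K y) n = y n" .
  qed
  have linJ: "Vector_Spaces.linear wsmul wsmul J"
    by (simp add: Vector_Spaces.linear_iff wsmul_vs J_def plus_fun_def pr_add_right wsmul_def pr_scale_right fun_eq_iff)
  have linK: "Vector_Spaces.linear wsmul wsmul K"
    by (simp add: Vector_Spaces.linear_iff wsmul_vs K_def plus_fun_def wsmul_def fun_eq_iff distrib_left
        sum.distrib sum_distrib_left mult_ac)
  have cJ: "continuous_on UNIV J" unfolding J_def
    by (intro continuous_on_coordinatewise_then_product cont_pr)
  have cK: "continuous_on UNIV K" unfolding K_def
    by (intro continuous_on_coordinatewise_then_product continuous_intros continuous_on_product_coordinates)
  have sub1: "J ` E \<subseteq> Phi"
  proof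
    fix z assume "z \<in> J ` E"
    then obtain x where x: "x \<in> E" "z = J x" by auto
    have "x \<in> W.span (range u)" using x Esp by auto
    hence "J x \<in> Phi"
    proof (induction rule: W.span_induct)
      case base
      show ?case
      proof (rule W.subspaceI)
        show "0 \<in> Collect (\<lambda>x. J x \<in> Phi)" by (simp add: J_def Phi_def fsupp_def)
        show "\<And>x y. x \<in> Collect (\<lambda>x. J x \<in> Phi) \<Longrightarrow> y \<in> Collect (\<lambda>x. J x \<in> Phi) \<Longrightarrow>
            x + y \<in> Collect (\<lambda>x. J x \<in> Phi)"
          using Phi_add by (simp add: J_def plus_fun_def pr_add_right)
        show "\<And>c x. x \<in> Collect (\<lambda>x. J x \<in> Phi) \<Longrightarrow> wsmul c x \<in> Collect (\<lambda>x. J x \<in> Phi)"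
          using Phi_scale by (simp add: J_def wsmul_def pr_scale_right)
      qed
    next
      case (step x)
      then obtain k where xk: "x = u k" by auto
      have "J (u k) = dl k" by (simp add: J_def bio dl_def fun_eq_iff)
      thus ?case using xk by simp
    qed
    thus "z \<in> Phi" using x by simp
  qed
  have sub2: "Phi \<subseteq> J ` E"
  proof
    fix y :: "nat \<Rightarrow> 'a" assume y: "y \<in> Phi"
    let ?T = "fsupp y"
    have fT: "finite ?T" using y by (simp add: Phi_fin)
    have "K y = (\<Sum>i\<in>?T. wsmul (y i) (u i))"
    proof
      fix j
      have "K y j = (\<Sum>i\<in>{..<Nn j} \<union> ?T. u i j * y i)"
        unfolding K_def by (rule sum.mono_neutral_left) (auto simp: fT Z not_less)
      also have "\<dots> = (\<Sum>i\<in>?T. u i j * y i)"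
        by (rule sum.mono_neutral_right) (use fT in \<open>auto simp: fsupp_def\<close>)
      finally show "K y j = (\<Sum>i\<in>?T. wsmul (y i) (u i)) j"
        by (simp add: sum_fun_app wsmul_def mult.commute)
    qed
    also have "\<dots> \<in> E" by (intro W.subspace_sum[OF sub] W.subspace_scale[OF sub] uE)
    finally have "K y \<in> E" .
    moreover have "J (K y) = y" using JK by simp
    ultimately show "y \<in> J ` E" by (metis image_eqI)
  qed
  show ?thesis using linJ linK cJ cK KJ JK sub1 sub2 by blast
qed



lemma JK_of:
  fixes E :: "(nat \<Rightarrow> 'a::real_normed_field) set"
  assumes "dense_countable_dim_subspace E"
  shows "\<exists>J K. Vector_Spaces.linear wsmul wsmul J \<and> Vector_Spaces.linear wsmul wsmul K \<and>
    continuous_on UNIV J \<and> continuous_on UNIV K \<and> (\<forall>x. K (J x) = x) \<and> (\<forall>y. J (K y) = y) \<and> J ` E = Phi"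
proof -
  obtain B where sub: "W.subspace E" and dense: "closure E = UNIV" and BE: "B \<subseteq> E"
    and indep: "\<not> W.dependent B" and spanB: "W.span B = E" and cB: "countable B" and iB: "infinite B"
    using assms unfolding dense_countable_dim_subspace_def by blast
  interpret cons E B using sub dense BE indep spanB cB iB by unfold_locales
  obtain u f :: "nat \<Rightarrow> nat \<Rightarrow> 'a" where
    "(\<forall>k. u k \<in> E)" "(\<forall>k. f k \<in> Phi)" "(\<forall>i k. pr (f i) (u k) = (if i = k then 1 else 0))"
    "E \<subseteq> W.span (range u)" "(\<forall>j. \<exists>(N::nat) a. dl j = (\<lambda>m. \<Sum>i<N. a i * f i m))"
    using result by blast
  thus ?thesis using build_JK[OF sub, of u f] by blast
qed

lemma main_gen:
  fixes E F :: "(nat \<Rightarrow> 'a::real_normed_field) set"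
  assumes "dense_countable_dim_subspace E" "dense_countable_dim_subspace F"
  shows "\<exists>J. in_GL_omega J \<and> J ` E = F"
proof -
  obtain J1 K1 where l1: "Vector_Spaces.linear wsmul wsmul J1" "Vector_Spaces.linear wsmul wsmul K1"
    and c1: "continuous_on UNIV J1" "continuous_on UNIV K1"
    and i1: "\<forall>x. K1 (J1 x) = x" "\<forall>y. J1 (K1 y) = y" and e1: "J1 ` E = Phi"
    using JK_of[OF assms(1)] by (elim exE conjE) (erule that, assumption+)
  obtain J2 K2 where l2: "Vector_Spaces.linear wsmul wsmul J2" "Vector_Spaces.linear wsmul wsmul K2"
    and c2: "continuous_on UNIV J2" "continuous_on UNIV K2"
    and i2: "\<forall>x. K2 (J2 x) = x" "\<forall>y. J2 (K2 y) = y" and e2: "J2 ` F = Phi"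
    using JK_of[OF assms(2)] by (elim exE conjE) (erule that, assumption+)
  define J where "J = K2 \<circ> J1"
  define K where "K = K1 \<circ> J2"
  have JK1: "J \<circ> K = id" unfolding J_def K_def by (rule ext) (simp add: i1(2) i2(1))
  have JK2: "K \<circ> J = id" unfolding J_def K_def by (rule ext) (simp add: i1(1) i2(2))
  note JK = JK1 JK2
  have lin: "Vector_Spaces.linear wsmul wsmul J"
    unfolding J_def by (rule Vector_Spaces.linear_compose[OF l1(1) l2(2)])
  have cJ: "continuous_on UNIV J" unfolding J_def comp_def
    by (rule continuous_on_compose2[OF c2(2) c1(1)]) auto
  have cK: "continuous_on UNIV K" unfolding K_def comp_def
    by (rule continuous_on_compose2[OF c1(2) c2(1)]) auto
  have bij: "bij J" by (rule o_bij[OF JK(2) JK(1)])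
  have inv: "inv J = K" by (rule inv_unique_comp[OF JK(1) JK(2)])
  have img: "J ` E = F"
  proof -
    have "J ` E = K2 ` Phi" unfolding J_def image_comp[symmetric] e1 by (rule refl)
    also have "\<dots> = K2 ` J2 ` F" by (simp add: e2)
    also have "\<dots> = F" using i2 by (simp add: image_image)
    finally show ?thesis .
  qed
  show ?thesis by (rule exI[of _ J]) (simp add: in_GL_omega_def lin bij cJ inv cK img)
qed

theorem theorem3p1:
  shows "(\<forall>E F :: (nat \<Rightarrow> real) set.
            dense_countable_dim_subspace E \<and> dense_countable_dim_subspace F \<longrightarrow>
            (\<exists>J. in_GL_omega J \<and> J ` E = F)) \<and>
         (\<forall>E F :: (nat \<Rightarrow> complex) set.
            dense_countable_dim_subspace E \<and> dense_countable_dim_subspace F \<longrightarrow>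
            (\<exists>J. in_GL_omega J \<and> J ` E = F))"
proof (intro conjI allI impI)
  fix E F :: "(nat \<Rightarrow> real) set"
  assume "dense_countable_dim_subspace E \<and> dense_countable_dim_subspace F"
  thus "\<exists>J. in_GL_omega J \<and> J ` E = F" by (elim conjE) (rule main_gen)
next
  fix E F :: "(nat \<Rightarrow> complex) set"
  assume "dense_countable_dim_subspace E \<and> dense_countable_dim_subspace F"
  thus "\<exists>J. in_GL_omega J \<and> J ` E = F" by (elim conjE) (rule main_gen)
qed


end
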